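(* Let $M:\mathbb{T}\to(0,\infty)$ be a positive scalar function on the unit circle $\mathbb{T}$, let $m\in\mathbb{N}$, and fix $\varepsilon\ge0$. For real coefficients $(p_0,\dots,p_m)$ and $(q_0,\dots,q_m)$ let $P(z)=\sum_{k=-m}^{m}p_kz^{-k}$ and $Q(z)=\sum_{k=-m}^{m}q_kz^{-k}$ with $p_{-k}=p_k$, $q_{-k}=q_k$. Then the set of coefficient vectors $(p_0,\dots,p_m,q_0,\dots,q_m)\in\mathbb{R}^{2m+2}$ satisfying (i) $P(z)>0$ and $Q(z)>0$ for all $z\in\mathbb{T}$, (ii) $q_0=1$, and (iii) $\max_{z\in\mathbb{T}}\big|P(z)/Q(z)-M(z)\big|\le\varepsilon$, is convex. *)

theory Defs
  imports "HOL-Analysis.Analysis"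
begin

definition sym_laurent :: "nat \<Rightarrow> (nat \<Rightarrow> real) \<Rightarrow> complex \<Rightarrow> complex" where
  "sym_laurent m p z = (\<Sum>k\<in>{-int m..int m}. complex_of_real (p (nat \<bar>k\<bar>)) * z powi (- k))"

text \<open>The set of coefficient vectors (p_0..p_m, q_0..q_m) in R^(2m+2), represented as
  pairs of functions nat => real vanishing beyond index m.\<close>
definition feasible_set ::
  "(complex \<Rightarrow> real) \<Rightarrow> nat \<Rightarrow> real \<Rightarrow> ((nat \<Rightarrow> real) \<times> (nat \<Rightarrow> real)) set" where
  "feasible_set M m \<epsilon> = {(p, q).
      (\<forall>k>m. p k = 0 \<and> q k = 0) \<and>
      (\<forall>z\<in>sphere 0 1. sym_laurent m p z \<in> \<real> \<and> 0 < Re (sym_laurent m p z)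
                       \<and> sym_laurent m q z \<in> \<real> \<and> 0 < Re (sym_laurent m q z)) \<and>
      q 0 = 1 \<and>
      (\<forall>z\<in>sphere 0 1. cmod (sym_laurent m p z / sym_laurent m q z - complex_of_real (M z)) \<le> \<epsilon>)}"

end

theory Submission
  imports Defs
begin

lemma sym_lin:
  "sym_laurent m (\<lambda>k. t * p k + s * q k) z
   = complex_of_real t * sym_laurent m p z + complex_of_real s * sym_laurent m q z"
  unfolding sym_laurent_def
  by (simp add: sum_distrib_left sum.distrib algebra_simps)

lemma cm_real:
  "cmod (complex_of_real a / complex_of_real b - complex_of_real c) = \<bar>a/b - c\<bar>"
proof -
  have "complex_of_real a / complex_of_real b - complex_of_real c = complex_of_real (a/b - c)"
    by simp
  thus ?thesis by (simp only: norm_of_real)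
qed

lemma real_step:
  fixes a1 a2 b1 b2 t e Mz :: real
  assumes "b1 > 0" "b2 > 0" "0 \<le> t" "t \<le> 1"
    "\<bar>a1 / b1 - Mz\<bar> \<le> e" "\<bar>a2 / b2 - Mz\<bar> \<le> e"
  shows "\<bar>(t*a1 + (1-t)*a2) / (t*b1 + (1-t)*b2) - Mz\<bar> \<le> e"
proof -
  have h1: "\<bar>a1 - Mz*b1\<bar> \<le> e*b1"
  proof -
    have "a1 - Mz*b1 = (a1/b1 - Mz)*b1" using assms(1) by (simp add: field_simps)
    hence "\<bar>a1 - Mz*b1\<bar> = \<bar>a1/b1 - Mz\<bar>*b1" using assms(1) by (simp add: abs_mult)
    thus ?thesis using assms(1,5) by (simp add: mult_right_mono)
  qed
  have h2: "\<bar>a2 - Mz*b2\<bar> \<le> e*b2"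
  proof -
    have "a2 - Mz*b2 = (a2/b2 - Mz)*b2" using assms(2) by (simp add: field_simps)
    hence "\<bar>a2 - Mz*b2\<bar> = \<bar>a2/b2 - Mz\<bar>*b2" using assms(2) by (simp add: abs_mult)
    thus ?thesis using assms(2,6) by (simp add: mult_right_mono)
  qed
  define B where "B = t*b1 + (1-t)*b2"
  have Bpos: "B > 0" unfolding B_def
  proof (cases "t = 0")
    case True thus "t*b1 + (1-t)*b2 > 0" using assms by simp
  next
    case False
    hence "t > 0" using assms by simp
    hence "t*b1 > 0" using assms by simp
    moreover have "(1-t)*b2 \<ge> 0" using assms by simp
    ultimately show "t*b1 + (1-t)*b2 > 0" by linarith
  qed
  have "\<bar>(t*a1 + (1-t)*a2) - Mz*B\<bar> = \<bar>t*(a1 - Mz*b1) + (1-t)*(a2 - Mz*b2)\<bar>"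
    unfolding B_def by (simp add: algebra_simps)
  also have "\<dots> \<le> t*\<bar>a1 - Mz*b1\<bar> + (1-t)*\<bar>a2 - Mz*b2\<bar>"
  proof -
    have "\<bar>t*(a1 - Mz*b1) + (1-t)*(a2 - Mz*b2)\<bar> \<le> \<bar>t*(a1 - Mz*b1)\<bar> + \<bar>(1-t)*(a2 - Mz*b2)\<bar>"
      by (rule abs_triangle_ineq)
    also have "\<dots> = t*\<bar>a1 - Mz*b1\<bar> + (1-t)*\<bar>a2 - Mz*b2\<bar>"
      using assms(3,4) by (simp add: abs_mult)
    finally show ?thesis .
  qed
  also have "\<dots> \<le> t*(e*b1) + (1-t)*(e*b2)"
    using h1 h2 assms(3,4) by (simp add: add_mono mult_left_mono)
  also have "\<dots> = e*B" unfolding B_def by (simp add: algebra_simps)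
  finally have k: "\<bar>(t*a1 + (1-t)*a2) - Mz*B\<bar> \<le> e*B" .
  have "(t*a1 + (1-t)*a2)/B - Mz = ((t*a1 + (1-t)*a2) - Mz*B)/B"
    using Bpos by (simp add: field_simps)
  hence "\<bar>(t*a1 + (1-t)*a2)/B - Mz\<bar> = \<bar>(t*a1 + (1-t)*a2) - Mz*B\<bar>/B"
    using Bpos by simp
  also have "\<dots> \<le> e" using k Bpos by (simp add: divide_le_eq)
  finally show ?thesis unfolding B_def .
qed

theorem lemma4p5:
  fixes M :: "complex \<Rightarrow> real" and m :: nat and \<epsilon> :: real
  assumes "\<forall>z\<in>sphere 0 1. 0 < M z"
    and "0 \<le> \<epsilon>"
  shows "\<forall>p1 q1 p2 q2 (t::real). (p1, q1) \<in> feasible_set M m \<epsilon> \<longrightarrow> (p2, q2) \<in> feasible_set M m \<epsilon>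
           \<longrightarrow> 0 \<le> t \<longrightarrow> t \<le> 1
           \<longrightarrow> (\<lambda>k. t * p1 k + (1 - t) * p2 k, \<lambda>k. t * q1 k + (1 - t) * q2 k) \<in> feasible_set M m \<epsilon>"
proof (intro allI impI)
  fix p1 q1 p2 q2 and t :: real
  assume F1: "(p1, q1) \<in> feasible_set M m \<epsilon>" and F2: "(p2, q2) \<in> feasible_set M m \<epsilon>"
    and t0: "0 \<le> t" and t1: "t \<le> 1"
  have A: "\<forall>z\<in>sphere 0 1. sym_laurent m (\<lambda>k. t * p1 k + (1 - t) * p2 k) z \<in> \<real>
      \<and> 0 < Re (sym_laurent m (\<lambda>k. t * p1 k + (1 - t) * p2 k) z)
      \<and> sym_laurent m (\<lambda>k. t * q1 k + (1 - t) * q2 k) z \<in> \<real>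
      \<and> 0 < Re (sym_laurent m (\<lambda>k. t * q1 k + (1 - t) * q2 k) z)
      \<and> cmod (sym_laurent m (\<lambda>k. t * p1 k + (1 - t) * p2 k) z
              / sym_laurent m (\<lambda>k. t * q1 k + (1 - t) * q2 k) z - complex_of_real (M z)) \<le> \<epsilon>"
  proof
    fix z :: complex assume z: "z \<in> sphere 0 1"
    from F1 z have c1: "sym_laurent m p1 z \<in> \<real>" "0 < Re (sym_laurent m p1 z)"
      "sym_laurent m q1 z \<in> \<real>" "0 < Re (sym_laurent m q1 z)"
      "cmod (sym_laurent m p1 z / sym_laurent m q1 z - complex_of_real (M z)) \<le> \<epsilon>"
      unfolding feasible_set_def by auto
    from F2 z have c2: "sym_laurent m p2 z \<in> \<real>" "0 < Re (sym_laurent m p2 z)"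
      "sym_laurent m q2 z \<in> \<real>" "0 < Re (sym_laurent m q2 z)"
      "cmod (sym_laurent m p2 z / sym_laurent m q2 z - complex_of_real (M z)) \<le> \<epsilon>"
      unfolding feasible_set_def by auto
    obtain a1 where a1: "sym_laurent m p1 z = of_real a1" using c1(1) Reals_cases by blast
    obtain b1 where b1: "sym_laurent m q1 z = of_real b1" using c1(3) Reals_cases by blast
    obtain a2 where a2: "sym_laurent m p2 z = of_real a2" using c2(1) Reals_cases by blast
    obtain b2 where b2: "sym_laurent m q2 z = of_real b2" using c2(3) Reals_cases by blast
    have pb1: "b1 > 0" using c1(4) b1 by simp
    have pb2: "b2 > 0" using c2(4) b2 by simp
    have e1: "\<bar>a1 / b1 - M z\<bar> \<le> \<epsilon>" using c1(5) unfolding a1 b1 cm_real .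
    have e2: "\<bar>a2 / b2 - M z\<bar> \<le> \<epsilon>" using c2(5) unfolding a2 b2 cm_real .
    have P: "sym_laurent m (\<lambda>k. t * p1 k + (1 - t) * p2 k) z = of_real (t*a1 + (1-t)*a2)"
      by (simp add: sym_lin a1 a2)
    have Q: "sym_laurent m (\<lambda>k. t * q1 k + (1 - t) * q2 k) z = of_real (t*b1 + (1-t)*b2)"
      by (simp add: sym_lin b1 b2)
    have Bpos: "t*b1 + (1-t)*b2 > 0"
    proof (cases "t = 0")
      case True thus ?thesis using pb2 by simp
    next
      case False
      hence "t*b1 > 0" using t0 pb1 by simp
      moreover have "(1-t)*b2 \<ge> 0" using t1 pb2 by simp
      ultimately show ?thesis by linarith
    qed
    have R: "\<bar>(t*a1 + (1-t)*a2) / (t*b1 + (1-t)*b2) - M z\<bar> \<le> \<epsilon>"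
      using real_step[OF pb1 pb2 t0 t1 e1 e2] .
    show "sym_laurent m (\<lambda>k. t * p1 k + (1 - t) * p2 k) z \<in> \<real>
      \<and> 0 < Re (sym_laurent m (\<lambda>k. t * p1 k + (1 - t) * p2 k) z)
      \<and> sym_laurent m (\<lambda>k. t * q1 k + (1 - t) * q2 k) z \<in> \<real>
      \<and> 0 < Re (sym_laurent m (\<lambda>k. t * q1 k + (1 - t) * q2 k) z)
      \<and> cmod (sym_laurent m (\<lambda>k. t * p1 k + (1 - t) * p2 k) z
              / sym_laurent m (\<lambda>k. t * q1 k + (1 - t) * q2 k) z - complex_of_real (M z)) \<le> \<epsilon>"
    proof (intro conjI)
      show "0 < Re (sym_laurent m (\<lambda>k. t * p1 k + (1 - t) * p2 k) z)"
      proof -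
        have "0 < a1" using c1(2) a1 by simp
        moreover have "0 < a2" using c2(2) a2 by simp
        ultimately have "t*a1 + (1-t)*a2 > 0"
          using t0 t1
          by (cases "t = 0") (simp, smt (verit) mult_nonneg_nonneg mult_pos_pos)
        thus ?thesis using P by simp
      qed
      show "cmod (sym_laurent m (\<lambda>k. t * p1 k + (1 - t) * p2 k) z
              / sym_laurent m (\<lambda>k. t * q1 k + (1 - t) * q2 k) z - complex_of_real (M z)) \<le> \<epsilon>"
        using R unfolding P Q cm_real .
    qed (use P Q Bpos in simp_all)
  qed
  have B: "\<forall>k>m. t * p1 k + (1 - t) * p2 k = 0 \<and> t * q1 k + (1 - t) * q2 k = 0"
    using F1 F2 unfolding feasible_set_def by auto
  have C: "t * q1 0 + (1 - t) * q2 0 = 1"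
    using F1 F2 unfolding feasible_set_def by auto
  show "(\<lambda>k. t * p1 k + (1 - t) * p2 k, \<lambda>k. t * q1 k + (1 - t) * q2 k) \<in> feasible_set M m \<epsilon>"
    unfolding feasible_set_def using A B C by auto
qed

end
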